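(* Let $s_1\ge1$ and $s_2\ge0$ be integers, let $f_{s_1,s_2}(N)=\binom{s_2}{N}\sum_i\binom{s_1}{i}\binom{s_1}{N-i}\binom{N}{i}$ for integers $N$, and let $g(s_1,s_2)$ be the integer at which $f_{s_1,s_2}$ attains its maximum (so that $f_{s_1,s_2}$ is non-decreasing for $N\le g(s_1,s_2)$ and non-increasing for $N\ge g(s_1,s_2)$). (a) If $s_2\le\frac12\left(\sqrt{8s_1+9}-1\right)$, then $g(s_1,s_2)=s_2$. (b) For all $s_1,s_2$, $g(s_1,s_2)\le 2s_1$. Moreover, for each integer $d$ with $0\le d\le 4$, $$g(s_1,s_2)\ge 2s_1-d\iff s_2\ge \frac{2}{d+1}(s_1^2+s_1)-\frac{d+2}{2}.$$
   Context: Binomial coefficients $\binom{a}{b}$ are $0$ when $b<0$ or $b>a$. The function $f_{s_1,s_2}$ is unimodal in $N$, so $g(s_1,s_2)$ exists; if the maximum is attained at two consecutive integers, either may be taken as $g(s_1,s_2)$. *)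

theory Defs
  imports Complex_Main
begin

text \<open>f_{s1,s2}(N) for integer N; binomials vanish outside range, so N < 0 gives 0,
  and for N >= 0 only summands 0 <= i <= N can be nonzero.\<close>
definition fss :: "nat \<Rightarrow> nat \<Rightarrow> int \<Rightarrow> nat" where
  "fss s1 s2 N = (if N < 0 then 0 else
     (s2 choose nat N) * (\<Sum>i\<le>nat N. (s1 choose i) * (s1 choose (nat N - i)) * (nat N choose i)))"

definition gss :: "nat \<Rightarrow> nat \<Rightarrow> int" where
  "gss s1 s2 = (GREATEST N. \<forall>M. fss s1 s2 M \<le> fss s1 s2 N)"

end

theory Submission
  imports Defs
begin

definition A :: "nat \<Rightarrow> nat \<Rightarrow> nat" where
  "A s K = (\<Sum>i\<le>K. (s choose i) * (s choose (K - i)) * (K choose i))"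

definition tt :: "nat \<Rightarrow> nat \<Rightarrow> nat \<Rightarrow> nat" where
  "tt s m K = (if 2*m \<le> K then (2*s - 2*m) choose (K - 2*m) else 0)"

definition S :: "nat \<Rightarrow> nat \<Rightarrow> nat" where
  "S s K = (\<Sum>m\<le>s. (s choose m)^2 * tt s m K)"

lemma vand_sym:
  assumes "i \<le> K"
  shows "K choose i = (\<Sum>m\<le>K. (i choose m) * ((K - i) choose m))"
proof -
  have "K choose i = K choose (K - i)" using assms binomial_symmetric by blast
  also have "\<dots> = (\<Sum>k\<le>K-i. (i choose k) * ((K-i) choose (K - i - k)))"
    using vandermonde[of i "K-i" "K-i"] assms by simp
  also have "\<dots> = (\<Sum>k\<le>K-i. (i choose k) * ((K-i) choose k))"
  proof (rule sum.cong[OF refl])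
    fix x assume "x \<in> {..K-i}"
    then have "(K-i) choose x = (K-i) choose (K-i-x)" by (intro binomial_symmetric) auto
    then show "(i choose x) * ((K-i) choose (K - i - x)) = (i choose x) * ((K-i) choose x)" by simp
  qed
  also have "\<dots> = (\<Sum>k\<le>K. (i choose k) * ((K-i) choose k))"
    by (rule sum.mono_neutral_left) auto
  finally show ?thesis .
qed

lemma cm: "(s choose i) * (i choose m) = (if m \<le> i then (s choose m) * ((s - m) choose (i - m)) else 0)"
proof (cases "m \<le> i")
  case True
  show ?thesis
  proof (cases "i \<le> s")
    case True with \<open>m \<le> i\<close> show ?thesis using choose_mult by simp
  next
    case False
    then show ?thesis using True by (cases "m \<le> s") (auto simp: binomial_eq_0)
  qed
qed simp

lemma inner_sum:
  assumes "2*m \<le> K"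
  shows "(\<Sum>i\<le>K. (if m \<le> i \<and> m \<le> K - i then ((s-m) choose (i - m)) * ((s-m) choose (K - i - m)) else 0))
     = (2*s - 2*m) choose (K - 2*m)"
proof -
  have "(\<Sum>i\<le>K. (if m \<le> i \<and> m \<le> K - i then ((s-m) choose (i - m)) * ((s-m) choose (K - i - m)) else 0))
      = (\<Sum>i\<in>(\<lambda>l. l + m) ` {..K-2*m}. ((s-m) choose (i - m)) * ((s-m) choose (K - i - m)))"
    apply (rule sum.mono_neutral_cong_right)
    using assms apply (auto simp: image_iff)
    subgoal for i by (drule bspec[where x="i-m"]) auto
    done
  also have "\<dots> = (\<Sum>l\<le>K-2*m. ((s-m) choose l) * ((s-m) choose (K - 2*m - l)))"
    by (subst sum.reindex) (auto simp: inj_on_def algebra_simps intro!: sum.cong arg_cong[where f="\<lambda>x. (s-m) choose x"])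
  also have "\<dots> = ((s-m) + (s-m)) choose (K - 2*m)" by (rule vandermonde)
  also have "(s-m) + (s-m) = 2*s - 2*m" by simp
  finally show ?thesis .
qed

lemma A_eq_S: "A s K = S s K"
proof -
  have "A s K = (\<Sum>i\<le>K. \<Sum>m\<le>K. (s choose i) * (i choose m) * ((s choose (K - i)) * ((K - i) choose m)))"
    unfolding A_def
    by (rule sum.cong) (auto simp: vand_sym sum_distrib_left mult_ac)
  also have "\<dots> = (\<Sum>i\<le>K. \<Sum>m\<le>K. (s choose m)^2 *
       (if m \<le> i \<and> m \<le> K - i then ((s-m) choose (i - m)) * ((s-m) choose (K - i - m)) else 0))"
    by (rule sum.cong[OF refl], rule sum.cong[OF refl]) (simp add: cm power2_eq_square)
  also have "\<dots> = (\<Sum>m\<le>K. \<Sum>i\<le>K. (s choose m)^2 *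
       (if m \<le> i \<and> m \<le> K - i then ((s-m) choose (i - m)) * ((s-m) choose (K - i - m)) else 0))"
    by (rule sum.swap)
  also have "\<dots> = (\<Sum>m\<le>K. (s choose m)^2 * tt s m K)"
  proof (rule sum.cong[OF refl])
    fix m assume "m \<in> {..K}"
    show "(\<Sum>i\<le>K. (s choose m)^2 *
       (if m \<le> i \<and> m \<le> K - i then ((s-m) choose (i - m)) * ((s-m) choose (K - i - m)) else 0))
       = (s choose m)^2 * tt s m K"
    proof (cases "2*m \<le> K")
      case True
      then show ?thesis by (simp add: sum_distrib_left[symmetric] inner_sum tt_def)
    next
      case False
      then have "\<And>i. \<not> (m \<le> i \<and> m \<le> K - i)" by auto
      then show ?thesis using False by (auto simp: tt_def intro!: sum.neutral)
    qed
  qed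
  also have "\<dots> = (\<Sum>m\<le>K+s. (s choose m)^2 * tt s m K)"
    by (rule sum.mono_neutral_left) (auto simp: tt_def)
  also have "\<dots> = S s K"
    unfolding S_def
    by (rule sum.mono_neutral_right) auto
  finally show ?thesis .
qed

lemma suc_binom: "Suc k * (n choose Suc k) = (n - k) * (n choose k)"
  using binomial_absorption[of k n] binomial_absorb_comp[of n k] by simp

lemma tt_step:
  assumes "K \<ge> 1" "m \<le> s"
  shows "int K * tt s m K = (2*int s + 1 - int K) * tt s m (K-1) + 2 * int m * tt s m K"
proof (cases "2*m < K")
  case True
  define n where "n = 2*s - 2*m"
  define j where "j = K - 2*m - 1"
  have K: "K - 2*m = Suc j" "K - 1 - 2*m = j" using True by (auto simp: j_def)
  have t1: "tt s m K = n choose Suc j" using True K by (simp add: tt_def n_def)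
  have le: "2*m \<le> K - 1" using True by simp
  have t2: "tt s m (K-1) = n choose j" using le K unfolding tt_def n_def by (simp only: if_True)
  have e: "Suc j * (n choose Suc j) = (n - j) * (n choose j)" by (rule suc_binom)
  show ?thesis
  proof (cases "j \<le> n")
    case True
    have nj: "int (n - j) = 2*int s + 1 - int K" using True \<open>2*m < K\<close> assms(2) unfolding n_def j_def by auto
    have KK: "int K = int (Suc j) + 2 * int m" using \<open>2*m < K\<close> unfolding j_def by auto
    have e': "int (Suc j) * int (n choose Suc j) = int (n - j) * int (n choose j)"
      using e by (simp only: of_nat_mult[symmetric])
    have "int K * tt s m K = int (Suc j) * int (n choose Suc j) + 2 * int m * tt s m K"
      unfolding KK t1 by (simp only: distrib_right)
    also have "\<dots> = (2*int s + 1 - int K) * tt s m (K-1) + 2 * int m * tt s m K"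
      unfolding e' nj t2 ..
    finally show ?thesis .
  next
    case False
    then show ?thesis using t1 t2 by (simp add: binomial_eq_0)
  qed
next
  case False
  show ?thesis
  proof (cases "2*m = K")
    case True
    then show ?thesis using assms(1) by (auto simp: tt_def)
  next
    case False
    with \<open>\<not> 2*m < K\<close> have "\<not> 2*m \<le> K" "\<not> 2*m \<le> K - 1" by auto
    then show ?thesis unfolding tt_def by (simp only: if_False)
  qed
qed

lemma tt_shift:
  assumes "m \<le> s"
  shows "int ((s choose m)^2) * ((int K - 2*int m) * (int K - 2*int m - 1)) * tt s m K
    = 2 * int (m+1) * int (s choose (m+1)) * int (s choose m) * (2*int s - 2*int m - 1) * tt s (m+1) K"
proof (cases "2*m + 2 \<le> K")
  case True
  define n where "n = 2*s - 2*m"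
  define i where "i = K - 2*m - 2"
  have t1: "tt s m K = n choose Suc (Suc i)" using True unfolding tt_def n_def i_def
    by (simp add: Suc_diff_Suc numeral_2_eq_2)
  have t2: "tt s (m+1) K = (n - 2) choose i" using True unfolding tt_def n_def i_def
    by (simp add: algebra_simps)
  have jj0: "int K - 2*int m = int (Suc (Suc i))" "int K - 2*int m - 1 = int (Suc i)"
    using True unfolding i_def by auto
  have jj: "(int K - 2*int m) * (int K - 2*int m - 1) = int (Suc (Suc i)) * int (Suc i)"
    using jj0 by simp
  have a1: "Suc (Suc i) * (n choose Suc (Suc i)) = n * ((n-1) choose Suc i)" by (rule binomial_absorption)
  have a2: "Suc i * ((n-1) choose Suc i) = (n-1) * ((n-1-1) choose i)" by (rule binomial_absorption)
  have nat_id: "Suc (Suc i) * Suc i * (n choose Suc (Suc i)) = n * (n-1) * ((n-2) choose i)"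
    using a1 a2 by (metis diff_diff_left mult.assoc mult.left_commute one_add_one)
  have sb: "Suc m * (s choose Suc m) = (s - m) * (s choose m)" by (rule suc_binom)
  show ?thesis
  proof (cases "m = s")
    case True
    then have "n = 0" unfolding n_def by simp
    then show ?thesis using t1 True by simp
  next
    case False
    then have ms: "m < s" using assms by simp
    have nn: "int n = 2 * int (s - m)" "int (n - 1) = 2*int s - 2*int m - 1" using ms unfolding n_def by auto
    have "int ((s choose m)^2) * ((int K - 2*int m) * (int K - 2*int m - 1)) * tt s m K
        = int (s choose m) * int (s choose m) * int (Suc (Suc i) * Suc i * (n choose Suc (Suc i)))"
      unfolding jj t1 power2_eq_square of_nat_mult by (simp only: mult_ac)
    also have "\<dots> = int (s choose m) * (int (s choose m) * int n) * int (n-1) * int ((n-2) choose i)"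
      unfolding nat_id by simp
    also have "int (s choose m) * int n = 2 * int ((s - m) * (s choose m))" unfolding nn by simp
    also have "(s - m) * (s choose m) = Suc m * (s choose Suc m)" using sb by simp
    finally show ?thesis unfolding t2 nn by (simp add: algebra_simps)
  qed
next
  case False
  then have t2: "tt s (m+1) K = 0" unfolding tt_def by simp
  have "((int K - 2*int m) * (int K - 2*int m - 1)) * tt s m K = 0"
  proof (cases "2*m \<le> K")
    case True
    with False have "int K - 2*int m = 0 \<or> int K - 2*int m - 1 = 0" by auto
    then show ?thesis by auto
  next
    case False
    then show ?thesis unfolding tt_def by simp
  qed
  then show ?thesis using t2 by (simp add: mult.assoc)
qed

definition Mm :: "nat \<Rightarrow> nat \<Rightarrow> int" where
  "Mm s K = (\<Sum>m\<le>s. int m * int ((s choose m)^2) * int (tt s m K))"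

definition Rr :: "nat \<Rightarrow> nat \<Rightarrow> nat \<Rightarrow> int" where
  "Rr s K m = 2 * int m * int (s choose m) * int (s choose (m - 1)) * (2*int s - 2*int m + 1) * int (tt s m K)"

lemma S_int: "int (S s K) = (\<Sum>m\<le>s. int ((s choose m)^2) * int (tt s m K))"
  unfolding S_def by simp

lemma sumA:
  assumes "K \<ge> 1"
  shows "int K * int (S s K) = (2*int s + 1 - int K) * int (S s (K-1)) + 2 * Mm s K"
proof -
  have "int K * int (S s K) = (\<Sum>m\<le>s. int ((s choose m)^2) * (int K * int (tt s m K)))"
    unfolding S_int sum_distrib_left by (simp add: mult_ac)
  also have "\<dots> = (\<Sum>m\<le>s. int ((s choose m)^2) * ((2*int s + 1 - int K) * int (tt s m (K-1)) + 2 * int m * int (tt s m K)))"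
    by (rule sum.cong[OF refl]) (simp add: tt_step[OF assms])
  also have "\<dots> = (2*int s + 1 - int K) * int (S s (K-1)) + 2 * Mm s K"
    unfolding S_int Mm_def sum_distrib_left sum.distrib[symmetric]
    by (rule sum.cong[OF refl]) (simp add: algebra_simps)
  finally show ?thesis .
qed

lemma sumB:
  "(\<Sum>m\<le>s. int ((s choose m)^2) * ((int K - 2*int m) * (int K - 2*int m - 1)) * int (tt s m K))
   = (\<Sum>m\<le>s. Rr s K m)"
proof -
  have "(\<Sum>m\<le>s. int ((s choose m)^2) * ((int K - 2*int m) * (int K - 2*int m - 1)) * int (tt s m K))
     = (\<Sum>m\<le>s. Rr s K (Suc m))"
    apply (rule sum.cong[OF refl])
    apply (subst tt_shift)
     apply simp
    apply (simp add: Rr_def algebra_simps)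
    done
  also have "\<dots> = (\<Sum>m\<le>Suc s. Rr s K m) - Rr s K 0"
    unfolding sum.atMost_Suc_shift[of "Rr s K" s] by simp
  also have "\<dots> = (\<Sum>m\<le>s. Rr s K m)"
    by (simp add: Rr_def)
  finally show ?thesis .
qed

lemma term_ineq:
  assumes "m \<le> s"
  shows "Rr s K m \<le> int ((s choose m)^2) * int (tt s m K) * (4 * int m^2 + 2 * int m)"
proof (cases m)
  case 0
  then show ?thesis by (simp add: Rr_def)
next
  case (Suc k)
  define c where "c = int (s choose m)"
  define c' where "c' = int (s choose (m-1))"
  have sb: "Suc k * (s choose Suc k) = (s - k) * (s choose k)" by (rule suc_binom)
  have km: "k < s" using Suc assms by simp
  have mc0: "int m * c = int (s - k) * c'"
    unfolding c_def c'_def Suc diff_Suc_1 of_nat_mult[symmetric] sb ..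
  have sk: "int (s - k) = int s - int m + 1" using km Suc by simp
  have c'0: "c' \<ge> 0" unfolding c'_def by simp
  have E: "(int s - int m + 1) * (2 * int m + 1) * c' = int m * (c' * (2*int s - 2*int m + 1)) + (int s + 1) * c'"
    by (simp add: algebra_simps)
  have sc: "(int s + 1) * c' \<ge> 0" using c'0 by simp
  have mc: "int m * c = (int s - int m + 1) * c'" using mc0 sk by simp
  have "int m * (c * (2 * int m + 1)) = (int m * c) * (2 * int m + 1)" by (simp only: mult.assoc)
  also have "\<dots> = (int s - int m + 1) * c' * (2*int m+1)" unfolding mc ..
  also have "\<dots> = (int s - int m + 1) * (2 * int m + 1) * c'" by (simp only: mult_ac)
  finally have "int m * (c * (2 * int m + 1)) = (int s - int m + 1) * (2 * int m + 1) * c'" .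
  then have "int m * (c' * (2*int s - 2*int m + 1)) \<le> int m * (c * (2 * int m + 1))"
    using E sc by linarith
  then have key: "c' * (2*int s - 2*int m + 1) \<le> c * (2 * int m + 1)"
    using Suc by (simp add: mult_le_cancel_left)
  have nn: "0 \<le> 2 * int m * c * int (tt s m K)" unfolding c_def by simp
  have "Rr s K m = (2 * int m * c * int (tt s m K)) * (c' * (2*int s - 2*int m + 1))"
    unfolding Rr_def c_def c'_def by (simp add: algebra_simps)
  also have "\<dots> \<le> (2 * int m * c * int (tt s m K)) * (c * (2 * int m + 1))"
    by (rule mult_left_mono[OF key nn])
  also have "\<dots> = int ((s choose m)^2) * int (tt s m K) * (4 * int m^2 + 2 * int m)"
    unfolding c_def by (simp add: algebra_simps power2_eq_square)
  finally show ?thesis .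
qed

lemma Lprime:
  assumes "K \<ge> 1"
  shows "2 * (2*int s + 1 - int K) * int (S s (K-1)) \<le> (int K + 1) * int (S s K)"
proof -
  have "int K * (int K - 1) * int (S s K) =
     (\<Sum>m\<le>s. int ((s choose m)^2) * ((int K - 2*int m) * (int K - 2*int m - 1)) * int (tt s m K))
     + (\<Sum>m\<le>s. int ((s choose m)^2) * int (tt s m K) * (4*int m * int K - 4 * int m^2 - 2*int m))"
    unfolding S_int sum_distrib_left sum.distrib[symmetric]
    by (rule sum.cong[OF refl]) (simp add: algebra_simps power2_eq_square)
  also have "\<dots> = (\<Sum>m\<le>s. Rr s K m)
     + (\<Sum>m\<le>s. int ((s choose m)^2) * int (tt s m K) * (4*int m * int K - 4 * int m^2 - 2*int m))"
    unfolding sumB ..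
  also have "\<dots> \<le> (\<Sum>m\<le>s. int ((s choose m)^2) * int (tt s m K) * (4 * int m^2 + 2 * int m))
     + (\<Sum>m\<le>s. int ((s choose m)^2) * int (tt s m K) * (4*int m * int K - 4 * int m^2 - 2*int m))"
    by (intro add_right_mono sum_mono term_ineq) simp
  also have "\<dots> = 4 * int K * Mm s K"
    unfolding Mm_def sum_distrib_left sum.distrib[symmetric]
    by (rule sum.cong[OF refl]) (simp add: algebra_simps power2_eq_square)
  finally have "int K * ((int K - 1) * int (S s K)) \<le> int K * (4 * Mm s K)" by (simp add: algebra_simps)
  then have h: "(int K - 1) * int (S s K) \<le> 4 * Mm s K" using assms by (simp add: mult_le_cancel_left)
  have "2 * (2*int s + 1 - int K) * int (S s (K-1)) = 2 * (int K * int (S s K)) - 4 * Mm s K"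
    using sumA[OF assms, of s] by (simp add: algebra_simps)
  then show ?thesis using h by (simp add: algebra_simps)
qed

lemma top_sum:
  assumes "d \<le> s"
  shows "A s (2*s - d) = (\<Sum>p\<le>d. (s choose p) * (s choose (d-p)) * ((2*s-d) choose (s-p)))"
proof -
  let ?K = "2*s - d"
  let ?g = "\<lambda>i. (s choose i) * (s choose (?K - i)) * (?K choose i)"
  have "A s ?K = (\<Sum>i\<in>(\<lambda>p. s - p) ` {..d}. ?g i)"
    unfolding A_def
  proof (rule sum.mono_neutral_right)
    show "(\<lambda>p. s - p) ` {..d} \<subseteq> {..?K}" using assms by auto
    show "\<forall>i\<in>{..?K} - (\<lambda>p. s - p) ` {..d}. ?g i = 0"
    proof
      fix i assume i: "i \<in> {..?K} - (\<lambda>p. s - p) ` {..d}"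
      have "i > s \<or> ?K - i > s"
      proof (rule ccontr)
        assume "\<not> (i > s \<or> ?K - i > s)"
        then have "s - (s - i) = i" "s - i \<le> d" by auto
        then have "i \<in> (\<lambda>p. s - p) ` {..d}" by (metis atMost_iff image_eqI)
        then show False using i by blast
      qed
      then show "?g i = 0" by auto
    qed
  qed simp
  also have "\<dots> = (\<Sum>p\<le>d. ?g (s - p))"
    by (subst sum.reindex) (use assms in \<open>auto simp: inj_on_def\<close>)
  also have "\<dots> = (\<Sum>p\<le>d. (s choose p) * (s choose (d-p)) * ((2*s-d) choose (s-p)))"
  proof (rule sum.cong[OF refl])
    fix p assume "p \<in> {..d}"
    then have p: "p \<le> d" by simp
    have 1: "s choose (s - p) = s choose p" using p assms by (metis binomial_symmetric diff_diff_cancel diff_le_self le_trans)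
    have e: "?K - (s - p) = s - (d - p)" using p assms by auto
    have 2: "s choose (s - (d - p)) = s choose (d - p)" using p assms
      by (metis binomial_symmetric diff_le_self le_trans)
    show "?g (s - p) = (s choose p) * (s choose (d-p)) * ((2*s-d) choose (s-p))"
      unfolding e 1 2 ..
  qed
  finally show ?thesis .
qed

lemma ff_prod:
  assumes "p \<le> n"
  shows "fact n / fact (n - p) = (\<Prod>i<p. real n - real i)"
  using assms
proof (induction p)
  case 0
  then show ?case by simp
next
  case (Suc p)
  have eq: "n - p = Suc (n - Suc p)" using Suc.prems by simp
  have f: "fact (n - p) = real (n - p) * fact (n - Suc p)"
  proof -
    have "fact (n - p) = (fact (Suc (n - Suc p)) :: real)" using eq by simp
    also have "\<dots> = real (Suc (n - Suc p)) * fact (n - Suc p)" by (rule fact_Suc)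
    also have "real (Suc (n - Suc p)) = real (n - p)" using eq by simp
    finally show ?thesis .
  qed
  have "fact n / fact (n - Suc p) = fact n / fact (n - p) * real (n - p)"
    unfolding f using Suc.prems by (simp add: field_simps)
  also have "\<dots> = (\<Prod>i<p. real n - real i) * (real n - real p)"
    using Suc by (simp add: of_nat_diff)
  finally show ?case by simp
qed

lemma term_real:
  assumes "p \<le> d" "d \<le> s"
  shows "real ((s choose p) * (s choose (d-p)) * ((2*s-d) choose (s-p))) * (fact (2*s) / fact (2*s-d)) * fact d
     = real ((2*s) choose s) * real (d choose p) * (fact s / fact (s-p))^2 * (fact s / fact (s-(d-p)))^2"
proof -
  have e1: "2*s - d - (s - p) = s - (d - p)" using assms by auto
  have e2: "2*s - s = s" by simp
  have b1: "real (s choose p) = fact s / (fact p * fact (s - p))" using assms by (simp add: binomial_fact)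
  have b2: "real (s choose (d-p)) = fact s / (fact (d-p) * fact (s - (d-p)))" using assms by (simp add: binomial_fact)
  have b3: "real ((2*s-d) choose (s-p)) = fact (2*s-d) / (fact (s-p) * fact (s - (d-p)))"
  proof -
    have le: "s - p \<le> 2*s - d" using assms by auto
    show ?thesis using binomial_fact[OF le, where 'a=real] unfolding e1 by simp
  qed
  have b4: "real ((2*s) choose s) = fact (2*s) / (fact s * fact s)" using binomial_fact[of s "2*s"] by simp
  have b5: "real (d choose p) = fact d / (fact p * fact (d - p))" using assms by (simp add: binomial_fact)
  show ?thesis
    unfolding of_nat_mult b1 b2 b3 b4 b5
    by (simp add: field_simps power2_eq_square)
qed

lemma A_formula:
  assumes "d \<le> s"
  shows "real (A s (2*s - d)) * (\<Prod>i<d. 2 * real s - real i) * fact d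
     = real ((2*s) choose s) * (\<Sum>p\<le>d. real (d choose p) * (\<Prod>i<p. real s - real i)^2 * (\<Prod>i<d-p. real s - real i)^2)"
proof -
  have pr: "(\<Prod>i<d. 2 * real s - real i) = fact (2*s) / fact (2*s-d)"
    using ff_prod[of d "2*s"] assms by simp
  have "real (A s (2*s - d)) * (\<Prod>i<d. 2 * real s - real i) * fact d
     = (\<Sum>p\<le>d. real ((s choose p) * (s choose (d-p)) * ((2*s-d) choose (s-p))) * (fact (2*s) / fact (2*s-d)) * fact d)"
    unfolding top_sum[OF assms] pr of_nat_sum sum_distrib_right ..
  also have "\<dots> = (\<Sum>p\<le>d. real ((2*s) choose s) * real (d choose p) * (fact s / fact (s-p))^2 * (fact s / fact (s-(d-p)))^2)"
    by (rule sum.cong[OF refl], rule term_real) (use assms in auto)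
  also have "\<dots> = real ((2*s) choose s) * (\<Sum>p\<le>d. real (d choose p) * (\<Prod>i<p. real s - real i)^2 * (\<Prod>i<d-p. real s - real i)^2)"
    unfolding sum_distrib_left
  proof (rule sum.cong[OF refl])
    fix p assume "p \<in> {..d}"
    then have h: "p \<le> s" "d - p \<le> s" using assms by auto
    show "real ((2*s) choose s) * real (d choose p) * (fact s / fact (s-p))^2 * (fact s / fact (s-(d-p)))^2
      = real ((2*s) choose s) * (real (d choose p) * (\<Prod>i<p. real s - real i)^2 * (\<Prod>i<d-p. real s - real i)^2)"
      unfolding ff_prod[OF h(1)] ff_prod[OF h(2)] by (simp only: mult_ac)
  qed
  finally show ?thesis .
qed

definition Qp :: "nat \<Rightarrow> real \<Rightarrow> real" where
  "Qp d s = (\<Sum>p\<le>d. real (d choose p) * (\<Prod>i<p. s - real i)^2 * (\<Prod>i<d-p. s - real i)^2)"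

lemma Qp_nonneg: "Qp d s \<ge> 0"
  unfolding Qp_def by (intro sum_nonneg mult_nonneg_nonneg) auto

lemma Q0: "Qp 0 s = (1::real)"
  unfolding Qp_def
  by (simp add: eval_nat_numeral sum.atMost_Suc prod.lessThan_Suc, (simp add: algebra_simps power2_eq_square eval_nat_numeral)?)

lemma Q1: "Qp 1 s = 2*s^2"
  unfolding Qp_def
  by (simp add: eval_nat_numeral sum.atMost_Suc prod.lessThan_Suc, (simp add: algebra_simps power2_eq_square eval_nat_numeral)?)

lemma Q2: "Qp 2 s = 2*s^2 - 4*s^3 + 4*s^4"
  unfolding Qp_def
  by (simp add: eval_nat_numeral sum.atMost_Suc prod.lessThan_Suc, (simp add: algebra_simps power2_eq_square eval_nat_numeral)?)

lemma Q3: "Qp 3 s = 8*s^2 - 24*s^3 + 32*s^4 - 24*s^5 + 8*s^6"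
  unfolding Qp_def
  by (simp add: eval_nat_numeral sum.atMost_Suc prod.lessThan_Suc, (simp add: algebra_simps power2_eq_square eval_nat_numeral)?)

lemma Q4: "Qp 4 s = 72*s^2 - 264*s^3 + 424*s^4 - 408*s^5 + 256*s^6 - 96*s^7 + 16*s^8"
  unfolding Qp_def
  by (simp add: eval_nat_numeral sum.atMost_Suc prod.lessThan_Suc, (simp add: algebra_simps power2_eq_square eval_nat_numeral)?)

lemma Q5: "Qp 5 s = 1152*s^2 - 4800*s^3 + 8800*s^4 - 9680*s^5 + 7296*s^6 - 3920*s^7 + 1440*s^8 - 320*s^9 + 32*s^10"
  unfolding Qp_def
  by (simp add: eval_nat_numeral sum.atMost_Suc prod.lessThan_Suc, (simp add: algebra_simps power2_eq_square eval_nat_numeral)?)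

lemma Apoly2:
  assumes "s \<ge> 3"
  shows "((2*s-2)^2+2) * Qp 2 s - 2 * Qp 3 s \<ge> 0"
proof -
  define t where "t = s - 3"
  have t0: "t \<ge> 0" and st: "s = t + 3" using assms unfolding t_def by auto
  have "((2*s-2)^2+2) * Qp 2 s - 2 * Qp 3 s = (180::real) + 192*t + 68*t^2 + 8*t^3"
    unfolding Q2 Q3 st by (simp add: algebra_simps power2_eq_square eval_nat_numeral)
  also have "\<dots> \<ge> 0" using t0 by (intro add_nonneg_nonneg mult_nonneg_nonneg zero_le_power) simp_all
  finally show ?thesis .
qed

lemma Bpoly2:
  assumes "s \<ge> 3"
  shows "2 * Qp 3 s - ((2*s-2)^2+2-2) * Qp 2 s > 0"
proof -
  define t where "t = s - 3"
  have t0: "t \<ge> 0" and st: "s = t + 3" using assms unfolding t_def by auto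
  have "2 * Qp 3 s - ((2*s-2)^2+2-2) * Qp 2 s = (288::real) + 480*t + 296*t^2 + 80*t^3 + 8*t^4"
    unfolding Q2 Q3 st by (simp add: algebra_simps power2_eq_square eval_nat_numeral)
  also have "\<dots> > 0" using t0 by (intro add_pos_nonneg add_nonneg_nonneg mult_nonneg_nonneg zero_le_power) simp_all
  finally show ?thesis .
qed

lemma Apoly3:
  assumes "s \<ge> 4"
  shows "((2*s-3)^2+3) * Qp 3 s - 2 * Qp 4 s \<ge> 0"
proof -
  define t where "t = s - 4"
  have t0: "t \<ge> 0" and st: "s = t + 4" using assms unfolding t_def by auto
  have "((2*s-3)^2+3) * Qp 3 s - 2 * Qp 4 s = (20736::real) + 31104*t + 18576*t^2 + 5520*t^3 + 816*t^4 + 48*t^5"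
    unfolding Q3 Q4 st by (simp add: algebra_simps power2_eq_square eval_nat_numeral)
  also have "\<dots> \<ge> 0" using t0 by (intro add_nonneg_nonneg mult_nonneg_nonneg zero_le_power) simp_all
  finally show ?thesis .
qed

lemma Bpoly3:
  assumes "s \<ge> 4"
  shows "2 * Qp 4 s - ((2*s-3)^2+3-4) * Qp 3 s > 0"
proof -
  define t where "t = s - 4"
  have t0: "t \<ge> 0" and st: "s = t + 4" using assms unfolding t_def by auto
  have "2 * Qp 4 s - ((2*s-3)^2+3-4) * Qp 3 s = (39168::real) + 71040*t + 54032*t^2 + 22032*t^3 + 5072*t^4 + 624*t^5 + 32*t^6"
    unfolding Q3 Q4 st by (simp add: algebra_simps power2_eq_square eval_nat_numeral)
  also have "\<dots> > 0" using t0 by (intro add_pos_nonneg add_nonneg_nonneg mult_nonneg_nonneg zero_le_power) simp_all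
  finally show ?thesis .
qed

lemma Apoly4:
  assumes "s \<ge> 5"
  shows "((2*s-4)^2+4) * Qp 4 s - 2 * Qp 5 s \<ge> 0"
proof -
  define t where "t = s - 5"
  have t0: "t \<ge> 0" and st: "s = t + 5" using assms unfolding t_def by auto
  have "((2*s-4)^2+4) * Qp 4 s - 2 * Qp 5 s = (3494400::real) + 6024960*t + 4455456*t^2 + 1831008*t^3 + 451392*t^4 + 66720*t^5 + 5472*t^6 + 192*t^7"
    unfolding Q4 Q5 st by (simp add: algebra_simps power2_eq_square eval_nat_numeral)
  also have "\<dots> \<ge> 0" using t0 by (intro add_nonneg_nonneg mult_nonneg_nonneg zero_le_power) simp_all
  finally show ?thesis .
qed

lemma Bpoly4:
  assumes "s \<ge> 5"
  shows "2 * Qp 5 s - ((2*s-4)^2+4-4) * Qp 4 s > 0"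
proof -
  define t where "t = s - 5"
  have t0: "t \<ge> 0" and st: "s = t + 5" using assms unfolding t_def by auto
  have "2 * Qp 5 s - ((2*s-4)^2+4-4) * Qp 4 s = (3340800::real) + 6846720*t + 6143392*t^2 + 3153856*t^3 + 1013504*t^4 + 208768*t^5 + 26912*t^6 + 1984*t^7 + 64*t^8"
    unfolding Q4 Q5 st by (simp add: algebra_simps power2_eq_square eval_nat_numeral)
  also have "\<dots> > 0" using t0 by (intro add_pos_nonneg add_nonneg_nonneg mult_nonneg_nonneg zero_le_power) simp_all
  finally show ?thesis .
qed

lemma aux1: "k \<noteq> 0 \<Longrightarrow> a \<noteq> 0 \<Longrightarrow> f \<noteq> 0 \<Longrightarrow> k * (c*q/(a*k*f)) = c/(a*f) * (q::real)"
  by (simp add: field_simps)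

lemma aux2: "a \<noteq> 0 \<Longrightarrow> f \<noteq> 0 \<Longrightarrow> m \<noteq> 0 \<Longrightarrow> x * (c*q/(a*f)) = c/(a*(m*f)) * (m*x*(q::real))"
  by (simp add: field_simps)

lemma ratio_sign:
  assumes "d + 1 \<le> s"
  shows "x * real (A s (2*s-d)) - real (2*s-d) * real (A s (2*s-d-1))
     = (real ((2*s) choose s) / ((\<Prod>i<d. 2 * real s - real i) * fact (d+1))) * (real (d+1) * x * Qp d (real s) - Qp (d+1) (real s))"
proof -
  define c where "c = real ((2*s) choose s)"
  define \<alpha> where "\<alpha> = (\<Prod>i<d. 2 * real s - real i)"
  have apos: "\<alpha> > 0" unfolding \<alpha>_def using assms by (intro prod_pos) auto
  have F1: "real (A s (2*s - d)) * \<alpha> * fact d = c * Qp d (real s)"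
    using A_formula[of d s] assms unfolding c_def \<alpha>_def Qp_def by simp
  have F2: "real (A s (2*s - (d+1))) * (\<alpha> * (2 * real s - real d)) * fact (d+1) = c * Qp (d+1) (real s)"
    using A_formula[of "d+1" s] assms unfolding c_def \<alpha>_def Qp_def by simp
  have e: "2*s - d - 1 = 2*s - (d+1)" by simp
  have K: "real (2*s-d) = 2 * real s - real d" using assms by (simp add: of_nat_diff)
  have Kp: "2 * real s - real d > 0" using assms by simp
  have fpos: "fact d > (0::real)" by simp
  have A1: "real (A s (2*s - d)) = c * Qp d (real s) / (\<alpha> * fact d)"
    using F1 apos fpos by (simp add: field_simps)
  have A2: "real (A s (2*s - (d+1))) = c * Qp (d+1) (real s) / (\<alpha> * (2 * real s - real d) * fact (d+1))"
  proof -
    have D: "\<alpha> * (2 * real s - real d) * fact (d+1) \<noteq> 0" using apos Kp by simp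
    show ?thesis using F2 D by (simp add: eq_divide_eq mult.assoc)
  qed
  have fd: "(fact (d+1) :: real) = real (d+1) * fact d" by simp
  define D where "D = \<alpha> * fact (d+1)"
  have Dp: "D > 0" unfolding D_def using apos by simp
  have X1: "x * real (A s (2*s - d)) = c / D * (real (d+1) * x * Qp d (real s))"
    unfolding A1 D_def fd by (rule aux2) (use apos fpos in auto)
  have X2: "real (2*s-d) * real (A s (2*s - (d+1))) = c / D * Qp (d+1) (real s)"
    unfolding A2 D_def K by (rule aux1) (use apos fpos Kp in auto)
  show ?thesis
    unfolding e X1 X2 right_diff_distrib D_def c_def \<alpha>_def ..
qed

lemma even_sq: "even (int s * int s + int s)"
  by (metis even_add even_mult_iff)

lemma mod5_sq: "(int s * int s + int s) mod 5 \<in> {0,1,2}"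
proof -
  define r where "r = int s mod 5"
  define k where "k = int s div 5"
  have s: "int s = 5*k + r" unfolding r_def k_def by simp
  have h: "int s * int s + int s = (r*r + r) + 5*(5*k*k + 2*k*r + k)" unfolding s by (simp add: algebra_simps)
  have e: "(int s * int s + int s) mod 5 = (r*r + r) mod 5" unfolding h by (rule mod_mult_self2)
  have "r \<in> {0,1,2,3,4}" unfolding r_def by auto
  then show ?thesis unfolding e by auto
qed

lemma cong4: "even (q::int) \<Longrightarrow> q mod 5 \<in> {0,1,2} \<Longrightarrow> \<not> 4*q - 30 \<le> 10*(y::int) \<Longrightarrow> 10*y \<le> 4*q - 30 - 4"
  by auto presburger+

lemma iff0: "(2*(q::real) \<le> s2 + 1 - 2*z) = (4*q + 4*z - 2 \<le> 2*s2)"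
  by (intro iffI) linarith+

lemma iff1: "(0 \<le> 2*(y::real) + 4 - 4*z - (2*q - 2*z + 1)) = (4*q + 4*z - 6 \<le> 4*y)"
  by (intro iffI) linarith+

lemma crit2:
  assumes s: "3 \<le> s"
  shows "Qp 3 (real s) \<le> 3 * (real s2 + 1 - (2*real s - 2)) * Qp 2 (real s)
     \<longleftrightarrow> 4*(int s*int s + int s) - 12 \<le> 6*int s2"
proof -
  define S where "S = real s"
  have S1: "S \<ge> 3" unfolding S_def using s by simp
  have Ap: "((2*S-2)^2+2) * Qp 2 S - 2 * Qp 3 S \<ge> 0" by (rule Apoly2[OF S1])
  have Bp: "2 * Qp 3 S - ((2*S-2)^2+2-2) * Qp 2 S > 0" by (rule Bpoly2[OF S1])
  have Q0: "Qp 2 S \<ge> 0" by (rule Qp_nonneg)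
  have sq: "(2*S-2)^2 = 4*(S*S) - 8*S + 4" by (simp add: power2_eq_square algebra_simps)
  show ?thesis
  proof
    assume P: "Qp 3 (real s) \<le> 3 * (real s2 + 1 - (2*real s - 2)) * Qp 2 (real s)"
    show "4*(int s*int s + int s) - 12 \<le> 6*int s2"
    proof (rule ccontr)
      assume "\<not> 4*(int s*int s + int s) - 12 \<le> 6*int s2"
      then have "6*int s2 \<le> 4*(int s*int s + int s) - 12 - 2"  by presburger
      then have "real_of_int (6*int s2) \<le> real_of_int (4*(int s*int s + int s) - 12 - 2)" by linarith
      then have "6 * real s2 \<le> 4*(S*S) + 4*S - 12 - 2" unfolding S_def by simp
      then have h: "2 * (3 * (real s2 + 1 - (2*S - 2))) \<le> (2*S-2)^2+2-2" unfolding sq by (simp add: algebra_simps)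
      have "2 * (3 * (real s2 + 1 - (2*S - 2))) * Qp 2 S \<le> ((2*S-2)^2+2-2) * Qp 2 S"
        by (rule mult_right_mono[OF h Q0])
      then show False using P Bp unfolding S_def by linarith
    qed
  next
    assume H: "4*(int s*int s + int s) - 12 \<le> 6*int s2"
    then have "real_of_int (4*(int s*int s + int s) - 12) \<le> real_of_int (6*int s2)" by linarith
    then have "4*(S*S) + 4*S - 12 \<le> 6 * real s2" unfolding S_def by simp
    then have h: "(2*S-2)^2+2 \<le> 2 * (3 * (real s2 + 1 - (2*S - 2)))" unfolding sq by (simp add: algebra_simps)
    have "((2*S-2)^2+2) * Qp 2 S \<le> 2 * (3 * (real s2 + 1 - (2*S - 2))) * Qp 2 S"
      by (rule mult_right_mono[OF h Q0])
    then show "Qp 3 (real s) \<le> 3 * (real s2 + 1 - (2*real s - 2)) * Qp 2 (real s)"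
      using Ap unfolding S_def by linarith
  qed
qed

lemma crit3:
  assumes s: "4 \<le> s"
  shows "Qp 4 (real s) \<le> 4 * (real s2 + 1 - (2*real s - 3)) * Qp 3 (real s)
     \<longleftrightarrow> 4*(int s*int s + int s) - 20 \<le> 8*int s2"
proof -
  define S where "S = real s"
  have S1: "S \<ge> 4" unfolding S_def using s by simp
  have Ap: "((2*S-3)^2+3) * Qp 3 S - 2 * Qp 4 S \<ge> 0" by (rule Apoly3[OF S1])
  have Bp: "2 * Qp 4 S - ((2*S-3)^2+3-4) * Qp 3 S > 0" by (rule Bpoly3[OF S1])
  have Q0: "Qp 3 S \<ge> 0" by (rule Qp_nonneg)
  have sq: "(2*S-3)^2 = 4*(S*S) - 12*S + 9" by (simp add: power2_eq_square algebra_simps)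
  show ?thesis
  proof
    assume P: "Qp 4 (real s) \<le> 4 * (real s2 + 1 - (2*real s - 3)) * Qp 3 (real s)"
    show "4*(int s*int s + int s) - 20 \<le> 8*int s2"
    proof (rule ccontr)
      assume "\<not> 4*(int s*int s + int s) - 20 \<le> 8*int s2"
      then have "8*int s2 \<le> 4*(int s*int s + int s) - 20 - 4" using even_sq[of s] by presburger
      then have "real_of_int (8*int s2) \<le> real_of_int (4*(int s*int s + int s) - 20 - 4)" by linarith
      then have "8 * real s2 \<le> 4*(S*S) + 4*S - 20 - 4" unfolding S_def by simp
      then have h: "2 * (4 * (real s2 + 1 - (2*S - 3))) \<le> (2*S-3)^2+3-4" unfolding sq by (simp add: algebra_simps)
      have "2 * (4 * (real s2 + 1 - (2*S - 3))) * Qp 3 S \<le> ((2*S-3)^2+3-4) * Qp 3 S"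
        by (rule mult_right_mono[OF h Q0])
      then show False using P Bp unfolding S_def by linarith
    qed
  next
    assume H: "4*(int s*int s + int s) - 20 \<le> 8*int s2"
    then have "real_of_int (4*(int s*int s + int s) - 20) \<le> real_of_int (8*int s2)" by linarith
    then have "4*(S*S) + 4*S - 20 \<le> 8 * real s2" unfolding S_def by simp
    then have h: "(2*S-3)^2+3 \<le> 2 * (4 * (real s2 + 1 - (2*S - 3)))" unfolding sq by (simp add: algebra_simps)
    have "((2*S-3)^2+3) * Qp 3 S \<le> 2 * (4 * (real s2 + 1 - (2*S - 3))) * Qp 3 S"
      by (rule mult_right_mono[OF h Q0])
    then show "Qp 4 (real s) \<le> 4 * (real s2 + 1 - (2*real s - 3)) * Qp 3 (real s)"
      using Ap unfolding S_def by linarith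
  qed
qed

lemma crit4:
  assumes s: "5 \<le> s"
  shows "Qp 5 (real s) \<le> 5 * (real s2 + 1 - (2*real s - 4)) * Qp 4 (real s)
     \<longleftrightarrow> 4*(int s*int s + int s) - 30 \<le> 10*int s2"
proof -
  define S where "S = real s"
  have S1: "S \<ge> 5" unfolding S_def using s by simp
  have Ap: "((2*S-4)^2+4) * Qp 4 S - 2 * Qp 5 S \<ge> 0" by (rule Apoly4[OF S1])
  have Bp: "2 * Qp 5 S - ((2*S-4)^2+4-4) * Qp 4 S > 0" by (rule Bpoly4[OF S1])
  have Q0: "Qp 4 S \<ge> 0" by (rule Qp_nonneg)
  have sq: "(2*S-4)^2 = 4*(S*S) - 16*S + 16" by (simp add: power2_eq_square algebra_simps)
  show ?thesis
  proof
    assume P: "Qp 5 (real s) \<le> 5 * (real s2 + 1 - (2*real s - 4)) * Qp 4 (real s)"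
    show "4*(int s*int s + int s) - 30 \<le> 10*int s2"
    proof (rule ccontr)
      assume "\<not> 4*(int s*int s + int s) - 30 \<le> 10*int s2"
      then have "10*int s2 \<le> 4*(int s*int s + int s) - 30 - 4" using even_sq[of s] mod5_sq[of s] by (intro cong4)
      then have "real_of_int (10*int s2) \<le> real_of_int (4*(int s*int s + int s) - 30 - 4)" by linarith
      then have "10 * real s2 \<le> 4*(S*S) + 4*S - 30 - 4" unfolding S_def by simp
      then have h: "2 * (5 * (real s2 + 1 - (2*S - 4))) \<le> (2*S-4)^2+4-4" unfolding sq by (simp add: algebra_simps)
      have "2 * (5 * (real s2 + 1 - (2*S - 4))) * Qp 4 S \<le> ((2*S-4)^2+4-4) * Qp 4 S"
        by (rule mult_right_mono[OF h Q0])
      then show False using P Bp unfolding S_def by linarith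
    qed
  next
    assume H: "4*(int s*int s + int s) - 30 \<le> 10*int s2"
    then have "real_of_int (4*(int s*int s + int s) - 30) \<le> real_of_int (10*int s2)" by linarith
    then have "4*(S*S) + 4*S - 30 \<le> 10 * real s2" unfolding S_def by simp
    then have h: "(2*S-4)^2+4 \<le> 2 * (5 * (real s2 + 1 - (2*S - 4)))" unfolding sq by (simp add: algebra_simps)
    have "((2*S-4)^2+4) * Qp 4 S \<le> 2 * (5 * (real s2 + 1 - (2*S - 4))) * Qp 4 S"
      by (rule mult_right_mono[OF h Q0])
    then show "Qp 5 (real s) \<le> 5 * (real s2 + 1 - (2*real s - 4)) * Qp 4 (real s)"
      using Ap unfolding S_def by linarith
  qed
qed

lemma crit0:
  assumes s: "1 \<le> s"
  shows "Qp 1 (real s) \<le> 1 * (real s2 + 1 - (2*real s - 0)) * Qp 0 (real s)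
     \<longleftrightarrow> 4*(int s*int s + int s) - 2 \<le> 2*int s2"
proof -
  have "Qp 1 (real s) \<le> 1 * (real s2 + 1 - (2*real s - 0)) * Qp 0 (real s) \<longleftrightarrow> 2*(real s*real s) \<le> real s2 + 1 - 2*real s"
    unfolding Q0 Q1 by (simp add: power2_eq_square)
  also have "\<dots> \<longleftrightarrow> 4*(real s*real s) + 4*real s - 2 \<le> 2*real s2" by (rule iff0)
  also have "\<dots> \<longleftrightarrow> real_of_int (4*(int s*int s + int s) - 2) \<le> real_of_int (2*int s2)" by simp
  also have "\<dots> \<longleftrightarrow> 4*(int s*int s + int s) - 2 \<le> 2*int s2" by linarith
  finally show ?thesis .
qed

lemma crit1:
  assumes s: "2 \<le> s"
  shows "Qp 2 (real s) \<le> 2 * (real s2 + 1 - (2*real s - 1)) * Qp 1 (real s)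
     \<longleftrightarrow> 4*(int s*int s + int s) - 6 \<le> 4*int s2"
proof -
  define S where "S = real s"
  have Sp: "2 * (S*S) > 0" unfolding S_def using s by simp
  have e: "2 * (real s2 + 1 - (2*S - 1)) * Qp 1 S - Qp 2 S = (2 * (S*S)) * (2*real s2 + 4 - 4*S - (2*(S*S) - 2*S + 1))"
    unfolding Q1 Q2 by (simp add: power2_eq_square algebra_simps eval_nat_numeral)
  have "Qp 2 S \<le> 2 * (real s2 + 1 - (2*S - 1)) * Qp 1 S \<longleftrightarrow> 0 \<le> (2 * (S*S)) * (2*real s2 + 4 - 4*S - (2*(S*S) - 2*S + 1))"
    using e by linarith
  also have "\<dots> \<longleftrightarrow> 0 \<le> 2*real s2 + 4 - 4*S - (2*(S*S) - 2*S + 1)"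
    using Sp by (simp add: zero_le_mult_iff)
  also have "\<dots> \<longleftrightarrow> 4*(S*S) + 4*S - 6 \<le> 4*real s2" by (rule iff1)
  also have "\<dots> \<longleftrightarrow> real_of_int (4*(int s*int s + int s) - 6) \<le> real_of_int (4*int s2)"
    unfolding S_def by simp
  also have "\<dots> \<longleftrightarrow> 4*(int s*int s + int s) - 6 \<le> 4*int s2" by linarith
  finally show ?thesis unfolding S_def .
qed

lemma G3_0:
  assumes k1: "1 \<le> k" and kd: "k + 0 + 1 \<le> 2*s"
    and H: "4*(real s*real s + real s) - 2 \<le> 2 * real s2"
  shows "real k * real (k+1) \<le> (real s2 + 1 - real k) * (2*(2*real s + 1 - real k))"
proof -
  define X where "X = 2 * real s"
  define e where "e = X - real k"
  define y where "y = real s2 + 1 - real k"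
  define q where "q = real s * real s"
  have Hq: "4*q + 4*real s - 2 \<le> 2 * real s2" using H unfolding q_def by (simp add: algebra_simps)
  have XXq: "X*X = 4*q" unfolding X_def q_def by simp
  have Xs: "X = 2 * real s" unfolding X_def ..
  have e1: "0 + 1 \<le> e" unfolding e_def X_def using kd by linarith
  have k1': "1 \<le> real k" using k1 by simp
  have ek: "real k \<le> X - 0 - 1" using e1 unfolding e_def by linarith
  define B0 where "B0 = X*X - 0*X + 2"
  have sq1: "0 \<le> (X - 0)^2" by simp
  have sq1e: "(X - 0)^2 = X*X - 0*X + 0" by (simp add: power2_eq_square algebra_simps)
  have B0p: "B0 > 0" unfolding B0_def using sq1 sq1e by linarith
  have yexp: "2 * y = 2 * real s2 + 2 - 2 * real k" unfolding y_def by (simp add: algebra_simps)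
  have By0: "4*q - 0*X + 2 \<le> 2 * real s2 + 2 - 2 * real k"
    using Hq Xs ek by linarith
  have By: "B0 \<le> 2 * y" unfolding B0_def XXq yexp using By0 .
  have m3a: "(0+2) * B0 \<le> (e+1) * (2 * y)"
    by (rule mult_mono) (use e1 B0p By in auto)
  have m3: "(0+2) * B0 \<le> 2 * ((e+1) * y)" using m3a by (simp add: mult_ac)
  have m1: "real k * real (k+1) \<le> (X - 0 - 1) * (X - 0)"
    by (rule mult_mono) (use e1 k1' in \<open>auto simp: e_def\<close>)
  have m2: "1 * ((X - 0 - 1) * (X - 0)) \<le> (0+2) * B0"
  proof -
    have sq2: "0 \<le> (X - 2)^2" by simp
    have sq2e: "(X - 2)^2 = X*X - 4*X + 4" by (simp add: power2_eq_square algebra_simps)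
    have X0: "0 \<le> X" unfolding X_def by simp
    have a1: "1 * ((X - 0 - 1) * (X - 0)) = 1 * (X*X) - 1*X + 0"
      by (simp add: algebra_simps)
    have a2: "(0+2) * B0 = 2 * (X*X) - 0*X + 4"
      unfolding B0_def by (simp add: algebra_simps)
    show ?thesis unfolding a1 a2 using sq2 sq2e X0 by linarith
  qed
  have fin: "real k * real (k+1) \<le> 2 * ((e+1) * y)" using m1 m2 m3 by linarith
  have "2 * ((e+1) * y) = (real s2 + 1 - real k) * (2*(2*real s + 1 - real k))"
    unfolding e_def X_def y_def by (simp add: algebra_simps)
  then show ?thesis using fin by simp
qed

lemma G3_1:
  assumes k1: "1 \<le> k" and kd: "k + 1 + 1 \<le> 2*s"
    and H: "4*(real s*real s + real s) - 6 \<le> 4 * real s2"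
  shows "real k * real (k+1) \<le> (real s2 + 1 - real k) * (2*(2*real s + 1 - real k))"
proof -
  define X where "X = 2 * real s"
  define e where "e = X - real k"
  define y where "y = real s2 + 1 - real k"
  define q where "q = real s * real s"
  have Hq: "4*q + 4*real s - 6 \<le> 4 * real s2" using H unfolding q_def by (simp add: algebra_simps)
  have XXq: "X*X = 4*q" unfolding X_def q_def by simp
  have Xs: "X = 2 * real s" unfolding X_def ..
  have e1: "1 + 1 \<le> e" unfolding e_def X_def using kd by linarith
  have k1': "1 \<le> real k" using k1 by simp
  have ek: "real k \<le> X - 1 - 1" using e1 unfolding e_def by linarith
  define B0 where "B0 = X*X - 2*X + 6"
  have sq1: "0 \<le> (X - 1)^2" by simp
  have sq1e: "(X - 1)^2 = X*X - 2*X + 1" by (simp add: power2_eq_square algebra_simps)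
  have B0p: "B0 > 0" unfolding B0_def using sq1 sq1e by linarith
  have yexp: "4 * y = 4 * real s2 + 4 - 4 * real k" unfolding y_def by (simp add: algebra_simps)
  have By0: "4*q - 2*X + 6 \<le> 4 * real s2 + 4 - 4 * real k"
    using Hq Xs ek by linarith
  have By: "B0 \<le> 4 * y" unfolding B0_def XXq yexp using By0 .
  have m3a: "(1+2) * B0 \<le> (e+1) * (4 * y)"
    by (rule mult_mono) (use e1 B0p By in auto)
  have m3: "(1+2) * B0 \<le> 4 * ((e+1) * y)" using m3a by (simp add: mult_ac)
  have m1: "real k * real (k+1) \<le> (X - 1 - 1) * (X - 1)"
    by (rule mult_mono) (use e1 k1' in \<open>auto simp: e_def\<close>)
  have m2: "2 * ((X - 1 - 1) * (X - 1)) \<le> (1+2) * B0"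
  proof -
    have sq2: "0 \<le> (X - 2)^2" by simp
    have sq2e: "(X - 2)^2 = X*X - 4*X + 4" by (simp add: power2_eq_square algebra_simps)
    have X0: "0 \<le> X" unfolding X_def by simp
    have a1: "2 * ((X - 1 - 1) * (X - 1)) = 2 * (X*X) - 6*X + 4"
      by (simp add: algebra_simps)
    have a2: "(1+2) * B0 = 3 * (X*X) - 6*X + 18"
      unfolding B0_def by (simp add: algebra_simps)
    show ?thesis unfolding a1 a2 using sq2 sq2e X0 by linarith
  qed
  have fin: "real k * real (k+1) \<le> 2 * ((e+1) * y)" using m1 m2 m3 by linarith
  have "2 * ((e+1) * y) = (real s2 + 1 - real k) * (2*(2*real s + 1 - real k))"
    unfolding e_def X_def y_def by (simp add: algebra_simps)
  then show ?thesis using fin by simp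
qed

lemma G3_2:
  assumes k1: "1 \<le> k" and kd: "k + 2 + 1 \<le> 2*s"
    and H: "4*(real s*real s + real s) - 12 \<le> 6 * real s2"
  shows "real k * real (k+1) \<le> (real s2 + 1 - real k) * (2*(2*real s + 1 - real k))"
proof -
  define X where "X = 2 * real s"
  define e where "e = X - real k"
  define y where "y = real s2 + 1 - real k"
  define q where "q = real s * real s"
  have Hq: "4*q + 4*real s - 12 \<le> 6 * real s2" using H unfolding q_def by (simp add: algebra_simps)
  have XXq: "X*X = 4*q" unfolding X_def q_def by simp
  have Xs: "X = 2 * real s" unfolding X_def ..
  have e1: "2 + 1 \<le> e" unfolding e_def X_def using kd by linarith
  have k1': "1 \<le> real k" using k1 by simp
  have ek: "real k \<le> X - 2 - 1" using e1 unfolding e_def by linarith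
  define B0 where "B0 = X*X - 4*X + 12"
  have sq1: "0 \<le> (X - 2)^2" by simp
  have sq1e: "(X - 2)^2 = X*X - 4*X + 4" by (simp add: power2_eq_square algebra_simps)
  have B0p: "B0 > 0" unfolding B0_def using sq1 sq1e by linarith
  have yexp: "6 * y = 6 * real s2 + 6 - 6 * real k" unfolding y_def by (simp add: algebra_simps)
  have By0: "4*q - 4*X + 12 \<le> 6 * real s2 + 6 - 6 * real k"
    using Hq Xs ek by linarith
  have By: "B0 \<le> 6 * y" unfolding B0_def XXq yexp using By0 .
  have m3a: "(2+2) * B0 \<le> (e+1) * (6 * y)"
    by (rule mult_mono) (use e1 B0p By in auto)
  have m3: "(2+2) * B0 \<le> 6 * ((e+1) * y)" using m3a by (simp add: mult_ac)
  have m1: "real k * real (k+1) \<le> (X - 2 - 1) * (X - 2)"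
    by (rule mult_mono) (use e1 k1' in \<open>auto simp: e_def\<close>)
  have m2: "3 * ((X - 2 - 1) * (X - 2)) \<le> (2+2) * B0"
  proof -
    have sq2: "0 \<le> (X - 2)^2" by simp
    have sq2e: "(X - 2)^2 = X*X - 4*X + 4" by (simp add: power2_eq_square algebra_simps)
    have X0: "0 \<le> X" unfolding X_def by simp
    have a1: "3 * ((X - 2 - 1) * (X - 2)) = 3 * (X*X) - 15*X + 18"
      by (simp add: algebra_simps)
    have a2: "(2+2) * B0 = 4 * (X*X) - 16*X + 48"
      unfolding B0_def by (simp add: algebra_simps)
    show ?thesis unfolding a1 a2 using sq2 sq2e X0 by linarith
  qed
  have fin: "real k * real (k+1) \<le> 2 * ((e+1) * y)" using m1 m2 m3 by linarith
  have "2 * ((e+1) * y) = (real s2 + 1 - real k) * (2*(2*real s + 1 - real k))"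
    unfolding e_def X_def y_def by (simp add: algebra_simps)
  then show ?thesis using fin by simp
qed

lemma G3_3:
  assumes k1: "1 \<le> k" and kd: "k + 3 + 1 \<le> 2*s"
    and H: "4*(real s*real s + real s) - 20 \<le> 8 * real s2"
  shows "real k * real (k+1) \<le> (real s2 + 1 - real k) * (2*(2*real s + 1 - real k))"
proof -
  define X where "X = 2 * real s"
  define e where "e = X - real k"
  define y where "y = real s2 + 1 - real k"
  define q where "q = real s * real s"
  have Hq: "4*q + 4*real s - 20 \<le> 8 * real s2" using H unfolding q_def by (simp add: algebra_simps)
  have XXq: "X*X = 4*q" unfolding X_def q_def by simp
  have Xs: "X = 2 * real s" unfolding X_def ..
  have e1: "3 + 1 \<le> e" unfolding e_def X_def using kd by linarith
  have k1': "1 \<le> real k" using k1 by simp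
  have ek: "real k \<le> X - 3 - 1" using e1 unfolding e_def by linarith
  define B0 where "B0 = X*X - 6*X + 20"
  have sq1: "0 \<le> (X - 3)^2" by simp
  have sq1e: "(X - 3)^2 = X*X - 6*X + 9" by (simp add: power2_eq_square algebra_simps)
  have B0p: "B0 > 0" unfolding B0_def using sq1 sq1e by linarith
  have yexp: "8 * y = 8 * real s2 + 8 - 8 * real k" unfolding y_def by (simp add: algebra_simps)
  have By0: "4*q - 6*X + 20 \<le> 8 * real s2 + 8 - 8 * real k"
    using Hq Xs ek by linarith
  have By: "B0 \<le> 8 * y" unfolding B0_def XXq yexp using By0 .
  have m3a: "(3+2) * B0 \<le> (e+1) * (8 * y)"
    by (rule mult_mono) (use e1 B0p By in auto)
  have m3: "(3+2) * B0 \<le> 8 * ((e+1) * y)" using m3a by (simp add: mult_ac)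
  have m1: "real k * real (k+1) \<le> (X - 3 - 1) * (X - 3)"
    by (rule mult_mono) (use e1 k1' in \<open>auto simp: e_def\<close>)
  have m2: "4 * ((X - 3 - 1) * (X - 3)) \<le> (3+2) * B0"
  proof -
    have sq2: "0 \<le> (X - 2)^2" by simp
    have sq2e: "(X - 2)^2 = X*X - 4*X + 4" by (simp add: power2_eq_square algebra_simps)
    have X0: "0 \<le> X" unfolding X_def by simp
    have a1: "4 * ((X - 3 - 1) * (X - 3)) = 4 * (X*X) - 28*X + 48"
      by (simp add: algebra_simps)
    have a2: "(3+2) * B0 = 5 * (X*X) - 30*X + 100"
      unfolding B0_def by (simp add: algebra_simps)
    show ?thesis unfolding a1 a2 using sq2 sq2e X0 by linarith
  qed
  have fin: "real k * real (k+1) \<le> 2 * ((e+1) * y)" using m1 m2 m3 by linarith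
  have "2 * ((e+1) * y) = (real s2 + 1 - real k) * (2*(2*real s + 1 - real k))"
    unfolding e_def X_def y_def by (simp add: algebra_simps)
  then show ?thesis using fin by simp
qed

lemma G3_4:
  assumes k1: "1 \<le> k" and kd: "k + 4 + 1 \<le> 2*s"
    and H: "4*(real s*real s + real s) - 30 \<le> 10 * real s2"
  shows "real k * real (k+1) \<le> (real s2 + 1 - real k) * (2*(2*real s + 1 - real k))"
proof -
  define X where "X = 2 * real s"
  define e where "e = X - real k"
  define y where "y = real s2 + 1 - real k"
  define q where "q = real s * real s"
  have Hq: "4*q + 4*real s - 30 \<le> 10 * real s2" using H unfolding q_def by (simp add: algebra_simps)
  have XXq: "X*X = 4*q" unfolding X_def q_def by simp
  have Xs: "X = 2 * real s" unfolding X_def ..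
  have e1: "4 + 1 \<le> e" unfolding e_def X_def using kd by linarith
  have k1': "1 \<le> real k" using k1 by simp
  have ek: "real k \<le> X - 4 - 1" using e1 unfolding e_def by linarith
  define B0 where "B0 = X*X - 8*X + 30"
  have sq1: "0 \<le> (X - 4)^2" by simp
  have sq1e: "(X - 4)^2 = X*X - 8*X + 16" by (simp add: power2_eq_square algebra_simps)
  have B0p: "B0 > 0" unfolding B0_def using sq1 sq1e by linarith
  have yexp: "10 * y = 10 * real s2 + 10 - 10 * real k" unfolding y_def by (simp add: algebra_simps)
  have By0: "4*q - 8*X + 30 \<le> 10 * real s2 + 10 - 10 * real k"
    using Hq Xs ek by linarith
  have By: "B0 \<le> 10 * y" unfolding B0_def XXq yexp using By0 .
  have m3a: "(4+2) * B0 \<le> (e+1) * (10 * y)"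
    by (rule mult_mono) (use e1 B0p By in auto)
  have m3: "(4+2) * B0 \<le> 10 * ((e+1) * y)" using m3a by (simp add: mult_ac)
  have m1: "real k * real (k+1) \<le> (X - 4 - 1) * (X - 4)"
    by (rule mult_mono) (use e1 k1' in \<open>auto simp: e_def\<close>)
  have m2: "5 * ((X - 4 - 1) * (X - 4)) \<le> (4+2) * B0"
  proof -
    have sq2: "0 \<le> (X - 2)^2" by simp
    have sq2e: "(X - 2)^2 = X*X - 4*X + 4" by (simp add: power2_eq_square algebra_simps)
    have X0: "0 \<le> X" unfolding X_def by simp
    have a1: "5 * ((X - 4 - 1) * (X - 4)) = 5 * (X*X) - 45*X + 100"
      by (simp add: algebra_simps)
    have a2: "(4+2) * B0 = 6 * (X*X) - 48*X + 180"
      unfolding B0_def by (simp add: algebra_simps)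
    show ?thesis unfolding a1 a2 using sq2 sq2e X0 by linarith
  qed
  have fin: "real k * real (k+1) \<le> 2 * ((e+1) * y)" using m1 m2 m3 by linarith
  have "2 * ((e+1) * y) = (real s2 + 1 - real k) * (2*(2*real s + 1 - real k))"
    unfolding e_def X_def y_def by (simp add: algebra_simps)
  then show ?thesis using fin by simp
qed

definition ff :: "nat \<Rightarrow> nat \<Rightarrow> nat \<Rightarrow> nat" where
  "ff s s2 k = (s2 choose k) * A s k"

lemma fss_eq: "fss s s2 N = (if N < 0 then 0 else ff s s2 (nat N))"
  unfolding fss_def ff_def A_def by simp

lemma A_zero:
  assumes "2*s < k" shows "A s k = 0"
  unfolding A_def
proof (rule sum.neutral, rule ballI)
  fix i assume "i \<in> {..k}"
  show "(s choose i) * (s choose (k - i)) * (k choose i) = 0"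
  proof (cases "i \<le> s")
    case True
    then have "s < k - i" using assms by linarith
    then show ?thesis by simp
  next
    case False
    then show ?thesis by simp
  qed
qed

lemma A_pos:
  assumes "k \<le> 2*s" shows "A s k > 0"
proof -
  define i where "i = k - min k s"
  have i1: "i \<le> s" "i \<le> k" "k - i \<le> s" unfolding i_def using assms by auto
  have "0 < (s choose i) * (s choose (k - i)) * (k choose i)" using i1 by simp
  also have "\<dots> \<le> A s k" unfolding A_def
    by (rule member_le_sum) (use i1 in auto)
  finally show ?thesis .
qed

lemma A0: "A s 0 = 1" by (simp add: A_def)

lemma ff_eqs:
  assumes "k = Suc j"
  shows "real k * real (ff s s2 k) = real (s2 choose j) * (real (s2 - j) * real (A s k))"
    and "real k * real (ff s s2 (k-1)) = real (s2 choose j) * (real k * real (A s (k-1)))"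
proof -
  have sb: "Suc j * (s2 choose Suc j) = (s2 - j) * (s2 choose j)" by (rule suc_binom)
  have "real k * real (ff s s2 k) = real (Suc j * (s2 choose Suc j)) * real (A s k)"
    unfolding ff_def assms of_nat_mult by (simp only: mult_ac)
  also have "\<dots> = real ((s2 - j) * (s2 choose j)) * real (A s k)" unfolding sb ..
  also have "\<dots> = real (s2 choose j) * (real (s2 - j) * real (A s k))" by simp
  finally show "real k * real (ff s s2 k) = real (s2 choose j) * (real (s2 - j) * real (A s k))" .
  show "real k * real (ff s s2 (k-1)) = real (s2 choose j) * (real k * real (A s (k-1)))"
    unfolding ff_def assms by simp
qed

lemma step_up:
  assumes k1: "1 \<le> k" and k2: "k \<le> 2*s"
    and ineq: "real k * real (A s (k-1)) \<le> (real s2 + 1 - real k) * real (A s k)"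
  shows "ff s s2 (k-1) \<le> ff s s2 k"
proof -
  obtain j where k: "k = Suc j" using k1 by (cases k) auto
  have "A s (k-1) > 0" using k2 by (intro A_pos) simp
  then have "0 < real k * real (A s (k-1))" using k1 by simp
  then have "0 < (real s2 + 1 - real k) * real (A s k)" using ineq by linarith
  then have "0 < real s2 + 1 - real k" by (simp add: zero_less_mult_iff)
  then have js: "j \<le> s2" using k by simp
  have r: "real (s2 - j) = real s2 + 1 - real k" using js k by (simp add: of_nat_diff)
  have "real k * real (ff s s2 (k-1)) \<le> real k * real (ff s s2 k)"
    unfolding ff_eqs[OF k] r by (rule mult_left_mono[OF ineq]) simp
  then show ?thesis using k1 by (simp add: mult_le_cancel_left_pos)
qed

lemma step_down:
  assumes k1: "1 \<le> k" and pos: "ff s s2 k > 0"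
    and ineq: "(real s2 + 1 - real k) * real (A s k) < real k * real (A s (k-1))"
  shows "ff s s2 k < ff s s2 (k-1)"
proof -
  obtain j where k: "k = Suc j" using k1 by (cases k) auto
  have "s2 choose k > 0" using pos unfolding ff_def by simp
  then have ks: "k \<le> s2" using binomial_eq_0_iff[of s2 k] by linarith
  then have js: "j \<le> s2" using k by simp
  have cpos: "real (s2 choose j) > 0" using js by simp
  have r: "real (s2 - j) = real s2 + 1 - real k" using js k by (simp add: of_nat_diff)
  have "real k * real (ff s s2 k) < real k * real (ff s s2 (k-1))"
    unfolding ff_eqs[OF k] r by (rule mult_strict_left_mono[OF ineq cpos])
  then show ?thesis using k1 by (simp add: mult_less_cancel_left_pos)
qed

lemma glob_step:
  assumes k1: "1 \<le> k" and k2: "k \<le> 2*s"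
    and H: "real k * real (k+1) \<le> (real s2 + 1 - real k) * (2*(2*real s + 1 - real k))"
  shows "real k * real (A s (k-1)) \<le> (real s2 + 1 - real k) * real (A s k)"
proof -
  have Li: "2 * (2*int s + 1 - int k) * int (S s (k-1)) \<le> (int k + 1) * int (S s k)"
    by (rule Lprime) (use k1 in simp)
  then have "real_of_int (2 * (2*int s + 1 - int k) * int (S s (k-1))) \<le> real_of_int ((int k + 1) * int (S s k))"
    by linarith
  then have L: "(2*(2*real s + 1 - real k)) * real (A s (k-1)) \<le> (real k + 1) * real (A s k)"
    by (simp add: A_eq_S)
  have pos: "2*(2*real s + 1 - real k) > 0" using k2 by simp
  have "0 < real k * real (k+1)" using k1 by simp
  then have "0 < (real s2 + 1 - real k) * (2*(2*real s + 1 - real k))" using H by linarith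
  then have x0: "0 \<le> real s2 + 1 - real k" using pos by (simp add: zero_less_mult_iff)
  have "(real k + 1) * (real k * real (A s (k-1))) = (real k * real (k+1)) * real (A s (k-1))"
    by (simp add: algebra_simps)
  also have "\<dots> \<le> ((real s2 + 1 - real k) * (2*(2*real s + 1 - real k))) * real (A s (k-1))"
    by (rule mult_right_mono[OF H]) simp
  also have "\<dots> = (real s2 + 1 - real k) * ((2*(2*real s + 1 - real k)) * real (A s (k-1)))"
    by (simp add: mult_ac)
  also have "\<dots> \<le> (real s2 + 1 - real k) * ((real k + 1) * real (A s k))"
    by (rule mult_left_mono[OF L x0])
  also have "\<dots> = (real k + 1) * ((real s2 + 1 - real k) * real (A s k))"
    by (simp add: mult_ac)
  finally have "(real k + 1) * (real k * real (A s (k-1))) \<le> (real k + 1) * ((real s2 + 1 - real k) * real (A s k))" .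
  moreover have "real k + 1 > 0" by simp
  ultimately show ?thesis by (rule mult_le_cancel_left_pos[THEN iffD1, rotated])
qed

definition Hd :: "nat \<Rightarrow> nat \<Rightarrow> nat \<Rightarrow> bool" where
  "Hd s s2 d = (4*(int s*int s + int s) - int ((d+1)*(d+2)) \<le> 2*int (d+1)*int s2)"

lemma crit:
  assumes "d \<le> 4" "d + 1 \<le> s"
  shows "(Qp (d+1) (real s) \<le> real (d+1) * (real s2 + 1 - (2*real s - real d)) * Qp d (real s)) \<longleftrightarrow> Hd s s2 d"
proof -
  consider "d=0" | "d=1" | "d=2" | "d=3" | "d=4" using assms(1) by linarith
  then show ?thesis
  proof cases
    case 1 then show ?thesis using crit0[of s s2] assms unfolding 1 by (simp add: Hd_def)
  next
    case 2 then show ?thesis using crit1[of s s2] assms unfolding 2 by (simp add: Hd_def numeral_2_eq_2)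
  next
    case 3 then show ?thesis using crit2[of s s2] assms unfolding 3 by (simp add: Hd_def)
  next
    case 4 then show ?thesis using crit3[of s s2] assms unfolding 4 by (simp add: Hd_def)
  next
    case 5 then show ?thesis using crit4[of s s2] assms unfolding 5 by (simp add: Hd_def)
  qed
qed

lemma A_vals: "A 4 4 = 346" "A 4 3 = 152" "A 3 3 = 56" "A 3 2 = 24" "A 3 1 = 6" "A 2 2 = 10"
  "A 2 1 = 4" "A 2 0 = 1" "A 1 1 = 2" "A 1 0 = 1"
  "A (Suc 0) 0 = 1" "A (Suc 0) (Suc 0) = 2" "A 2 (Suc 0) = 4" "A 3 (Suc 0) = 6"
  by (simp_all add: A_def eval_nat_numeral)

lemma aux_nat: "(3::real) \<le> 2 * real n \<Longrightarrow> 9 \<le> 5 * int n"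
proof -
  assume a: "(3::real) \<le> 2 * real n"
  have "\<not> n \<le> 1"
  proof
    assume "n \<le> 1"
    then have "real n \<le> 1" by simp
    then show False using a by linarith
  qed
  then show ?thesis by simp
qed

lemma G2:
  assumes d4: "d \<le> 4" and ds: "d < 2*s"
  shows "Hd s s2 d \<Longrightarrow> real (2*s-d) * real (A s (2*s-d-1)) \<le> (real s2 + 1 - real (2*s-d)) * real (A s (2*s-d))"
    and "\<not> Hd s s2 d \<Longrightarrow> (real s2 + 1 - real (2*s-d)) * real (A s (2*s-d)) < real (2*s-d) * real (A s (2*s-d-1))"
proof -
  have main: "(0 \<le> (real s2 + 1 - real (2*s-d)) * real (A s (2*s-d)) - real (2*s-d) * real (A s (2*s-d-1))) \<longleftrightarrow> Hd s s2 d"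
  proof (cases "d + 1 \<le> s")
    case True
    define x where "x = real s2 + 1 - real (2*s-d)"
    have xe: "x = real s2 + 1 - (2*real s - real d)" unfolding x_def using ds by (simp add: of_nat_diff)
    define P where "P = real ((2*s) choose s) / ((\<Prod>i<d. 2 * real s - real i) * fact (d+1))"
    have Ppos: "P > 0" unfolding P_def
      by (intro divide_pos_pos mult_pos_pos prod_pos) (use ds in auto)
    have rs: "x * real (A s (2*s-d)) - real (2*s-d) * real (A s (2*s-d-1))
       = P * (real (d+1) * x * Qp d (real s) - Qp (d+1) (real s))"
      unfolding P_def by (rule ratio_sign[OF True])
    have "(0 \<le> x * real (A s (2*s-d)) - real (2*s-d) * real (A s (2*s-d-1)))
       \<longleftrightarrow> 0 \<le> real (d+1) * x * Qp d (real s) - Qp (d+1) (real s)"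
      unfolding rs using Ppos by (simp add: zero_le_mult_iff)
    also have "\<dots> \<longleftrightarrow> Hd s s2 d" using crit[OF d4 True, of s2] unfolding xe by linarith
    finally show ?thesis unfolding x_def .
  next
    case False
    then have "(s = 1 \<and> d = 1) \<or> (s = 2 \<and> d = 2) \<or> (s = 2 \<and> d = 3) \<or> (s = 3 \<and> d = 3) \<or> (s = 3 \<and> d = 4) \<or> (s = 4 \<and> d = 4)"
      using d4 ds by auto
    then show ?thesis by (elim disjE) (auto simp: Hd_def A_vals dest: aux_nat)
  qed
  show "Hd s s2 d \<Longrightarrow> real (2*s-d) * real (A s (2*s-d-1)) \<le> (real s2 + 1 - real (2*s-d)) * real (A s (2*s-d))"
    using main by linarith
  show "\<not> Hd s s2 d \<Longrightarrow> (real s2 + 1 - real (2*s-d)) * real (A s (2*s-d)) < real (2*s-d) * real (A s (2*s-d-1))"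
    using main by linarith
qed

lemma Hd_mono:
  assumes "d' \<le> d" "d \<le> 4" "Hd s s2 d'"
  shows "Hd s s2 d"
proof -
  define Q where "Q = int s*int s + int s"
  define y where "y = int s2"
  have y0: "0 \<le> y" unfolding y_def by simp
  have h: "4*Q - int ((d'+1)*(d'+2)) \<le> 2*int (d'+1)*y" using assms(3) unfolding Hd_def Q_def y_def .
  have dd: "d \<in> {0,1,2,3,4}" "d' \<in> {0,1,2,3,4}" using assms(1,2) by auto
  have "4*Q - int ((d+1)*(d+2)) \<le> 2*int (d+1)*y"
    using dd h y0 assms(1) by (auto; linarith)
  then show ?thesis unfolding Hd_def Q_def y_def .
qed

lemma Hreal:
  "(real s2 \<ge> 2 / (real d + 1) * (real s ^ 2 + real s) - (real d + 2) / 2) \<longleftrightarrow> Hd s s2 d"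
proof -
  have e: "2 / (real d + 1) * (real s ^ 2 + real s) - (real d + 2) / 2
     = (4*(real s*real s + real s) - (real d+1)*(real d+2)) / (2*(real d+1))"
    by (simp add: field_simps power2_eq_square)
  have "(real s2 \<ge> 2 / (real d + 1) * (real s ^ 2 + real s) - (real d + 2) / 2)
     \<longleftrightarrow> 4*(real s*real s + real s) - (real d+1)*(real d+2) \<le> real s2 * (2*(real d+1))"
    unfolding e by (rule pos_divide_le_eq) simp
  also have "\<dots> \<longleftrightarrow> real_of_int (4*(int s*int s + int s) - int ((d+1)*(d+2))) \<le> real_of_int (2*int (d+1)*int s2)"
    by (simp add: algebra_simps)
  also have "\<dots> \<longleftrightarrow> Hd s s2 d" unfolding Hd_def of_int_le_iff ..
  finally show ?thesis .
qed

definition Pm :: "nat \<Rightarrow> nat \<Rightarrow> int \<Rightarrow> bool" where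
  "Pm s s2 N = (\<forall>M. fss s s2 M \<le> fss s s2 N)"

lemma fss0: "fss s s2 0 = 1" by (simp add: fss_eq ff_def A0)

lemma fss_out: "N < 0 \<or> 2*int s < N \<Longrightarrow> fss s s2 N = 0"
proof -
  assume "N < 0 \<or> 2*int s < N"
  then show ?thesis
  proof
    assume "N < 0" then show ?thesis by (simp add: fss_eq)
  next
    assume h: "2*int s < N"
    then have "2*s < nat N" by linarith
    then show ?thesis using h by (simp add: fss_eq ff_def A_zero)
  qed
qed

lemma Pm_bound: "Pm s s2 N \<Longrightarrow> 0 \<le> N \<and> N \<le> 2*int s"
proof -
  assume "Pm s s2 N"
  then have "fss s s2 0 \<le> fss s s2 N" unfolding Pm_def by blast
  then have "fss s s2 N \<noteq> 0" using fss0[of s s2] by simp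
  then show ?thesis using fss_out[of N s s2] by linarith
qed

lemma g_props:
  shows "Pm s s2 (gss s s2)" and "\<And>y. Pm s s2 y \<Longrightarrow> y \<le> gss s s2"
    and "0 \<le> gss s s2" and "gss s s2 \<le> 2*int s"
proof -
  let ?F = "fss s s2"
  have fin: "finite (?F ` {0..2*int s})" by simp
  have ne: "?F ` {0..2*int s} \<noteq> {}" by simp
  obtain x where x0: "Max (?F ` {0..2*int s}) = ?F x" "x \<in> {0..2*int s}"
    using Max_in[OF fin ne] by (rule imageE)
  then have x: "x \<in> {0..2*int s}" "?F x = Max (?F ` {0..2*int s})" by auto
  have Px: "Pm s s2 x" unfolding Pm_def
  proof
    fix M
    show "?F M \<le> ?F x"
    proof (cases "M \<in> {0..2*int s}")
      case True then show ?thesis using x(2) fin by simp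
    next
      case False then have "?F M = 0" using fss_out[of M s s2] by auto
      then show ?thesis by simp
    qed
  qed
  let ?PS = "{N. Pm s s2 N}"
  have sub: "?PS \<subseteq> {0..2*int s}" using Pm_bound by auto
  then have finP: "finite ?PS" using finite_subset by blast
  have neP: "?PS \<noteq> {}" using Px by blast
  define g0 where "g0 = Max ?PS"
  have Pg0: "Pm s s2 g0" unfolding g0_def using Max_in[OF finP neP] by simp
  have ub: "\<And>y. Pm s s2 y \<Longrightarrow> y \<le> g0" unfolding g0_def using finP by simp
  have geq: "gss s s2 = g0" unfolding gss_def Pm_def[symmetric]
    by (rule Greatest_equality) (use Pg0 ub in auto)
  show "Pm s s2 (gss s s2)" using geq Pg0 by simp
  show "\<And>y. Pm s s2 y \<Longrightarrow> y \<le> gss s s2" using geq ub by simp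
  show "0 \<le> gss s s2" "gss s s2 \<le> 2*int s" using Pm_bound[OF Pg0] geq by auto
qed

lemma chain:
  fixes f :: "nat \<Rightarrow> nat" and K j :: nat
  assumes "\<forall>k. 1 \<le> k \<and> k \<le> K \<longrightarrow> f (k-1) \<le> (f k :: nat)" "j \<le> K"
  shows "f j \<le> f K"
  using assms
proof (induction K)
  case 0 then show ?case by simp
next
  case (Suc K)
  show ?case
  proof (cases "j = Suc K")
    case True then show ?thesis by simp
  next
    case False
    then have "f j \<le> f K" using Suc by auto
    moreover have "f K \<le> f (Suc K)" using Suc.prems(1) by (metis diff_Suc_1 le_add1 le_refl plus_1_eq_Suc)
    ultimately show ?thesis by simp
  qed
qed

lemma GE:
  assumes K1: "1 \<le> K" and mono: "\<forall>k. 1 \<le> k \<and> k \<le> K \<longrightarrow> ff s s2 (k-1) \<le> ff s s2 k"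
  shows "int K \<le> gss s s2"
proof (rule ccontr)
  assume "\<not> int K \<le> gss s s2"
  then have lt: "gss s s2 < int K" by simp
  have g0: "0 \<le> gss s s2" by (rule g_props)
  define j where "j = nat (gss s s2)"
  have jK: "j \<le> K" using lt g0 unfolding j_def by linarith
  have "ff s s2 j \<le> ff s s2 K" by (rule chain[OF mono jK])
  moreover have "fss s s2 (gss s s2) = ff s s2 j" unfolding j_def using g0 by (simp add: fss_eq)
  moreover have "fss s s2 (int K) = ff s s2 K" by (simp add: fss_eq)
  ultimately have "Pm s s2 (int K)" using g_props(1)[of s s2] unfolding Pm_def by (metis order_trans)
  then have "int K \<le> gss s s2" by (rule g_props(2))
  then show False using lt by simp
qed

lemma LT:
  assumes K1: "1 \<le> K" and dec: "\<forall>k. K \<le> k \<and> ff s s2 k > 0 \<longrightarrow> ff s s2 k < ff s s2 (k-1)"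
  shows "gss s s2 < int K"
proof (rule ccontr)
  assume "\<not> gss s s2 < int K"
  then have ge: "int K \<le> gss s s2" by simp
  define j where "j = nat (gss s s2)"
  have jK: "K \<le> j" "gss s s2 = int j" using ge unfolding j_def by auto
  have fj: "fss s s2 (gss s s2) = ff s s2 j" using jK by (simp add: fss_eq)
  have "fss s s2 0 \<le> fss s s2 (gss s s2)" using g_props(1)[of s s2] unfolding Pm_def by blast
  then have pos: "ff s s2 j > 0" using fss0[of s s2] fj by simp
  then have "ff s s2 j < ff s s2 (j-1)" using dec jK by blast
  moreover have "fss s s2 (int (j-1)) = ff s s2 (j-1)" by (simp add: fss_eq)
  moreover have "fss s s2 (int (j-1)) \<le> fss s s2 (gss s s2)" using g_props(1)[of s s2] unfolding Pm_def by blast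
  ultimately show False using fj by simp
qed

lemma Hd_real: "Hd s s2 d \<Longrightarrow> 4*(real s*real s + real s) - real ((d+1)*(d+2)) \<le> 2*real (d+1)*real s2"
proof -
  assume "Hd s s2 d"
  then have "real_of_int (4*(int s*int s + int s) - int ((d+1)*(d+2))) \<le> real_of_int (2*int (d+1)*int s2)"
    unfolding Hd_def of_int_le_iff .
  then show ?thesis by simp
qed

lemma G3:
  assumes d4: "d \<le> 4" and k1: "1 \<le> k" and kd: "k + d + 1 \<le> 2*s" and H: "Hd s s2 d"
  shows "real k * real (k+1) \<le> (real s2 + 1 - real k) * (2*(2*real s + 1 - real k))"
proof -
  have Hr: "4*(real s*real s + real s) - real ((d+1)*(d+2)) \<le> 2*real (d+1)*real s2" by (rule Hd_real[OF H])
  consider "d=0" | "d=1" | "d=2" | "d=3" | "d=4" using d4 by linarith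
  then show ?thesis
  proof cases
    case 1 then show ?thesis using Hr kd by (intro G3_0[OF k1]) simp_all
  next
    case 2 then show ?thesis using Hr kd by (intro G3_1[OF k1]) simp_all
  next
    case 3 then show ?thesis using Hr kd by (intro G3_2[OF k1]) simp_all
  next
    case 4 then show ?thesis using Hr kd by (intro G3_3[OF k1]) simp_all
  next
    case 5 then show ?thesis using Hr kd by (intro G3_4[OF k1]) simp_all
  qed
qed

lemma partB2:
  assumes s1: "1 \<le> s" and d4: "d \<le> 4"
  shows "(2 * int s - int d \<le> gss s s2) \<longleftrightarrow> Hd s s2 d"
proof (cases "d < 2*s")
  case False
  have g0: "0 \<le> gss s s2" by (rule g_props)
  have "(2*s+1)*(2*s+2) \<le> (d+1)*(d+2)" using False by (intro mult_mono) auto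
  then have "int ((2*s+1)*(2*s+2)) \<le> int ((d+1)*(d+2))" by (simp only: of_nat_le_iff)
  then have "4*(int s*int s + int s) \<le> int ((d+1)*(d+2))" by (simp add: algebra_simps)
  moreover have "0 \<le> 2*int (d+1)*int s2" by simp
  ultimately have "Hd s s2 d" unfolding Hd_def by linarith
  then show ?thesis using g0 False by simp
next
  case True
  define K where "K = 2*s - d"
  have K1: "1 \<le> K" and Ki: "int K = 2*int s - int d" and K2: "K \<le> 2*s" using True unfolding K_def by auto
  show ?thesis
  proof
    assume "2 * int s - int d \<le> gss s s2"
    then have ge: "int K \<le> gss s s2" using Ki by simp
    show "Hd s s2 d"
    proof (rule ccontr)
      assume nH: "\<not> Hd s s2 d"
      have "gss s s2 < int K"
      proof (rule LT[OF K1], intro allI impI)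
        fix k assume kk: "K \<le> k \<and> 0 < ff s s2 k"
        then have k1: "1 \<le> k" using K1 by simp
        have "A s k > 0" using kk unfolding ff_def by simp
        then have k2: "k \<le> 2*s" using A_zero[of s k] by (cases "k \<le> 2*s") auto
        define d' where "d' = 2*s - k"
        have d'd: "d' \<le> d" and d'4: "d' \<le> 4" and d's: "d' < 2*s" and kd': "k = 2*s - d'"
          using kk k1 k2 d4 unfolding d'_def K_def by auto
        have nH': "\<not> Hd s s2 d'" using Hd_mono[OF d'd d4] nH by blast
        have "(real s2 + 1 - real (2*s-d')) * real (A s (2*s-d')) < real (2*s-d') * real (A s (2*s-d'-1))"
          by (rule G2(2)[OF d'4 d's nH'])
        then have "(real s2 + 1 - real k) * real (A s k) < real k * real (A s (k-1))" unfolding kd' by simp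
        then show "ff s s2 k < ff s s2 (k - 1)" using step_down[OF k1] kk by blast
      qed
      then show False using ge by simp
    qed
  next
    assume H: "Hd s s2 d"
    have "int K \<le> gss s s2"
    proof (rule GE[OF K1], intro allI impI)
      fix k assume kk: "1 \<le> k \<and> k \<le> K"
      then have k1: "1 \<le> k" and k2: "k \<le> 2*s" using K2 by auto
      show "ff s s2 (k - 1) \<le> ff s s2 k"
      proof (cases "k = K")
        case True
        have "real (2*s-d) * real (A s (2*s-d-1)) \<le> (real s2 + 1 - real (2*s-d)) * real (A s (2*s-d))"
          by (rule G2(1)[OF d4 \<open>d < 2*s\<close> H])
        then have "real k * real (A s (k-1)) \<le> (real s2 + 1 - real k) * real (A s k)"
          using True unfolding K_def by simp
        then show ?thesis by (rule step_up[OF k1 k2])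
      next
        case False
        then have kd: "k + d + 1 \<le> 2*s" using kk unfolding K_def by auto
        have "real k * real (A s (k-1)) \<le> (real s2 + 1 - real k) * real (A s k)"
          by (rule glob_step[OF k1 k2 G3[OF d4 k1 kd H]])
        then show ?thesis by (rule step_up[OF k1 k2])
      qed
    qed
    then show "2 * int s - int d \<le> gss s s2" using Ki by simp
  qed
qed

lemma partA:
  assumes s1: "1 \<le> s" and h: "real s2 \<le> (sqrt (8 * real s + 9) - 1) / 2"
  shows "gss s s2 = int s2"
proof -
  have "real s2 * 2 \<le> sqrt (8*real s + 9) - 1"
    using pos_le_divide_eq[of 2 "real s2" "sqrt (8*real s+9) - 1"] h by simp
  then have h1: "2*real s2 + 1 \<le> sqrt (8*real s + 9)" by linarith
  have "sqrt ((2*real s2 + 1)^2) = 2*real s2 + 1" by simp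
  then have "sqrt ((2*real s2 + 1)^2) \<le> sqrt (8*real s + 9)" using h1 by simp
  then have "(2*real s2 + 1)^2 \<le> 8*real s + 9" by (simp only: real_sqrt_le_iff)
  moreover have "(2*real s2 + 1)^2 = 4*(real s2*real s2) + 4*real s2 + 1" by (simp add: power2_eq_square algebra_simps)
  ultimately have "real s2*real s2 + real s2 \<le> 2*real s + 2" by linarith
  then have "real (s2*s2 + s2) \<le> real (2*s + 2)" by simp
  then have q: "s2*s2 + s2 \<le> 2*s + 2" by (simp only: of_nat_le_iff)
  have s2s: "s2 \<le> s"
  proof (rule ccontr)
    assume "\<not> s2 \<le> s" then have a: "s + 1 \<le> s2" by simp
    then have "(s+1)*(s+1) \<le> s2*s2" by (intro mult_mono) auto
    moreover have "(s+1)*(s+1) = s*s + 2*s + 1" by (simp add: algebra_simps)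
    moreover have "s \<le> s*s" using s1 by simp
    ultimately show False using q a s1 by linarith
  qed
  have qr: "real s2 * real (s2+1) \<le> 2*real s + 2"
  proof -
    have "real (s2*s2 + s2) \<le> real (2*s + 2)" using q by (simp only: of_nat_le_iff)
    then show ?thesis by (simp add: algebra_simps)
  qed
  have g0: "0 \<le> gss s s2" by (rule g_props)
  show ?thesis
  proof (rule antisym)
    have "fss s s2 0 \<le> fss s s2 (gss s s2)" using g_props(1)[of s s2] unfolding Pm_def by blast
    then have "ff s s2 (nat (gss s s2)) > 0" using fss0[of s s2] g0 by (simp add: fss_eq)
    then have "s2 choose (nat (gss s s2)) > 0" unfolding ff_def by simp
    then have "nat (gss s s2) \<le> s2" using binomial_eq_0_iff[of s2 "nat (gss s s2)"] by linarith
    then show "gss s s2 \<le> int s2" using g0 by linarith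
  next
    show "int s2 \<le> gss s s2"
    proof (cases "s2 = 0")
      case True then show ?thesis using g0 by simp
    next
      case False
      then have K1: "1 \<le> s2" by simp
      show ?thesis
      proof (rule GE[OF K1], intro allI impI)
        fix k assume kk: "1 \<le> k \<and> k \<le> s2"
        then have k1: "1 \<le> k" and k2: "k \<le> 2*s" and ks: "k \<le> s" and ks2: "k \<le> s2" using s2s by auto
        have a1: "real k * real (k+1) \<le> real s2 * real (s2+1)" using ks2 by (intro mult_mono) auto
        have a3: "2*real s + 2 \<le> 2*(2*real s + 1 - real k)" using ks by simp
        have y1: "1 \<le> real s2 + 1 - real k" using ks2 by simp
        have a4: "1 * (2*(2*real s + 1 - real k)) \<le> (real s2 + 1 - real k) * (2*(2*real s + 1 - real k))"
          by (rule mult_right_mono[OF y1]) (use ks in simp)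
        have "real k * real (k+1) \<le> (real s2 + 1 - real k) * (2*(2*real s + 1 - real k))"
          using a1 qr a3 a4 by linarith
        then have "real k * real (A s (k-1)) \<le> (real s2 + 1 - real k) * real (A s k)"
          by (rule glob_step[OF k1 k2])
        then show "ff s s2 (k - 1) \<le> ff s s2 k" by (rule step_up[OF k1 k2])
      qed
    qed
  qed
qed

theorem proposition1p3:
  fixes s1 s2 :: nat
  assumes "s1 \<ge> 1"
  shows "(real s2 \<le> (sqrt (8 * real s1 + 9) - 1) / 2 \<longrightarrow> gss s1 s2 = int s2)
    \<and> gss s1 s2 \<le> 2 * int s1
    \<and> (\<forall>d::nat. d \<le> 4 \<longrightarrow>
         (gss s1 s2 \<ge> 2 * int s1 - int d \<longleftrightarrow>
          real s2 \<ge> 2 / (real d + 1) * (real s1 ^ 2 + real s1) - (real d + 2) / 2))"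
proof (intro conjI allI impI)
  show "real s2 \<le> (sqrt (8 * real s1 + 9) - 1) / 2 \<Longrightarrow> gss s1 s2 = int s2"
    by (rule partA[OF assms])
  show "gss s1 s2 \<le> 2 * int s1" by (rule g_props)
  fix d :: nat assume d4: "d \<le> 4"
  show "(gss s1 s2 \<ge> 2 * int s1 - int d \<longleftrightarrow>
          real s2 \<ge> 2 / (real d + 1) * (real s1 ^ 2 + real s1) - (real d + 2) / 2)"
    unfolding Hreal partB2[OF assms d4] ..
qed

end
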